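(* Let $H$ be a digraph (possibly with loops) and let $D$ be an $H$-colored quasi-transitive digraph such that every directed $3$-cycle of $D$ is an $H$-cycle. For every $k \geq 2$, $D$ has a $(k,H)$-kernel.
   Context: All digraphs are finite. A digraph $D$ is quasi-transitive if for all distinct $u,v\in V(D)$, whenever there is a directed $uv$-path of length $2$, $u$ and $v$ are joined by an arc (in some direction). $D$ has no loops and comes with a map $\rho: A(D)\to V(H)$. For a walk $W=(x_0,\ldots,x_n)$ in $D$, there is an obstruction on $x_i$ if $(\rho(x_{i-1},x_i),\rho(x_i,x_{i+1})) \notin A(H)$; for an open walk this is considered at internal vertices $x_i$, $1\le i\le n-1$, for a closed walk at all $i\in\{0,\ldots,n-1\}$ with indices modulo $n$. $O_H(W)$ is the set of indices with an obstruction; the $H$-length is $l_H(W)=|O_H(W)|+1$ for open $W$ and $|O_H(W)|$ for closed $W$. An $H$-cycle is a directed cycle with no obstructions. A $(k,H)$-kernel ($k\ge2$) is a set $S\subseteq V(D)$ such that for every two distinct $u,v\in S$ every directed $uv$-path in $D$ has $H$-length at least $k$, and for every $x\in V(D)\setminus S$ there is a directed path from $x$ to a vertex of $S$ of $H$-length at most $k-1$. *)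

theory Defs
  imports Main
begin

definition digraph :: "'a set \<Rightarrow> ('a \<times> 'a) set \<Rightarrow> bool" where
  "digraph V A \<longleftrightarrow> finite V \<and> A \<subseteq> V \<times> V"

definition loopless :: "('a \<times> 'a) set \<Rightarrow> bool" where
  "loopless A \<longleftrightarrow> (\<forall>x. (x, x) \<notin> A)"

definition dpath :: "('a \<times> 'a) set \<Rightarrow> 'a list \<Rightarrow> bool" where
  "dpath A xs \<longleftrightarrow> xs \<noteq> [] \<and> distinct xs \<and>
     (\<forall>i. Suc i < length xs \<longrightarrow> (xs ! i, xs ! Suc i) \<in> A)"

(* directed cycle (x_0,...,x_{n-1},x_0) given by the list [x_0,...,x_{n-1}] *)
definition dcycle :: "('a \<times> 'a) set \<Rightarrow> 'a list \<Rightarrow> bool" where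
  "dcycle A xs \<longleftrightarrow> 2 \<le> length xs \<and> distinct xs \<and>
     (\<forall>i < length xs. (xs ! i, xs ! ((i + 1) mod length xs)) \<in> A)"

definition quasi_transitive :: "('a \<times> 'a) set \<Rightarrow> bool" where
  "quasi_transitive A \<longleftrightarrow>
     (\<forall>u v w. u \<noteq> v \<and> (u, w) \<in> A \<and> (w, v) \<in> A \<longrightarrow> (u, v) \<in> A \<or> (v, u) \<in> A)"

definition obs_open :: "('b \<times> 'b) set \<Rightarrow> ('a \<times> 'a \<Rightarrow> 'b) \<Rightarrow> 'a list \<Rightarrow> nat set" where
  "obs_open AH \<rho> xs = {i. 1 \<le> i \<and> i + 1 < length xs \<and>
       (\<rho> (xs ! (i - 1), xs ! i), \<rho> (xs ! i, xs ! (i + 1))) \<notin> AH}"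

definition H_length_open :: "('b \<times> 'b) set \<Rightarrow> ('a \<times> 'a \<Rightarrow> 'b) \<Rightarrow> 'a list \<Rightarrow> nat" where
  "H_length_open AH \<rho> xs = card (obs_open AH \<rho> xs) + 1"

definition obs_closed :: "('b \<times> 'b) set \<Rightarrow> ('a \<times> 'a \<Rightarrow> 'b) \<Rightarrow> 'a list \<Rightarrow> nat set" where
  "obs_closed AH \<rho> xs = (let n = length xs in {i. i < n \<and>
       (\<rho> (xs ! ((i + n - 1) mod n), xs ! i), \<rho> (xs ! i, xs ! ((i + 1) mod n))) \<notin> AH})"

definition H_cycle :: "('a \<times> 'a) set \<Rightarrow> ('b \<times> 'b) set \<Rightarrow> ('a \<times> 'a \<Rightarrow> 'b) \<Rightarrow> 'a list \<Rightarrow> bool" where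
  "H_cycle A AH \<rho> xs \<longleftrightarrow> dcycle A xs \<and> obs_closed AH \<rho> xs = {}"

definition kH_kernel :: "'a set \<Rightarrow> ('a \<times> 'a) set \<Rightarrow> ('b \<times> 'b) set \<Rightarrow> ('a \<times> 'a \<Rightarrow> 'b)
     \<Rightarrow> nat \<Rightarrow> 'a set \<Rightarrow> bool" where
  "kH_kernel V A AH \<rho> k S \<longleftrightarrow> S \<subseteq> V \<and>
     (\<forall>u\<in>S. \<forall>v\<in>S. u \<noteq> v \<longrightarrow>
        (\<forall>xs. dpath A xs \<and> hd xs = u \<and> last xs = v \<longrightarrow> k \<le> H_length_open AH \<rho> xs)) \<and>
     (\<forall>x \<in> V - S. \<exists>xs. dpath A xs \<and> hd xs = x \<and> last xs \<in> S \<and>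
        H_length_open AH \<rho> xs \<le> k - 1)"

end

theory Submission
  imports Defs
begin

fun walk :: "('a \<times> 'a) set \<Rightarrow> 'a list \<Rightarrow> bool" where
  "walk A [] = False"
| "walk A [x] = True"
| "walk A (x # y # ys) = ((x, y) \<in> A \<and> walk A (y # ys))"

lemma walk_append:
  assumes "xs \<noteq> []" "ys \<noteq> []"
  shows "walk A (xs @ ys) \<longleftrightarrow> walk A xs \<and> walk A ys \<and> (last xs, hd ys) \<in> A"
  using assms
proof (induction xs)
  case Nil then show ?case by simp
next
  case (Cons x xs)
  note IH = Cons.IH
  show ?case
  proof (cases "xs = []")
    case True then show ?thesis using Cons.prems by (cases ys) auto
  next
    case False
    then obtain y zs where xs: "xs = y # zs" by (cases xs) auto
    have "walk A (x # xs @ ys) = ((x, y) \<in> A \<and> walk A (xs @ ys))" using xs by simp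
    moreover have "walk A (x # xs) = ((x, y) \<in> A \<and> walk A xs)" using xs by simp
    ultimately show ?thesis using IH False Cons.prems xs by auto
  qed
qed

lemma walk_nth: "walk A xs \<Longrightarrow> Suc i < length xs \<Longrightarrow> (xs ! i, xs ! Suc i) \<in> A"
proof (induction xs arbitrary: i rule: walk.induct)
  case (3 A x y ys)
  then show ?case by (cases i) auto
qed auto

lemma walk_take: "walk A xs \<Longrightarrow> 0 < n \<Longrightarrow> walk A (take n xs)"
proof -
  assume w: "walk A xs" and n: "0 < n"
  show ?thesis
  proof (cases "n < length xs")
    case True
    have "xs = take n xs @ drop n xs" by simp
    then have "walk A (take n xs @ drop n xs)" using w by simp
    moreover have "take n xs \<noteq> []" "drop n xs \<noteq> []" using True n by auto
    ultimately show ?thesis using walk_append by blast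
  next
    case False then show ?thesis using w by simp
  qed
qed

lemma walk_drop: "walk A xs \<Longrightarrow> n < length xs \<Longrightarrow> walk A (drop n xs)"
proof -
  assume w: "walk A xs" and n: "n < length xs"
  show ?thesis
  proof (cases "n = 0")
    case False
    have "xs = take n xs @ drop n xs" by simp
    then have "walk A (take n xs @ drop n xs)" using w by simp
    moreover have "take n xs \<noteq> []" "drop n xs \<noteq> []" using False n by auto
    ultimately show ?thesis using walk_append by blast
  qed (use w in simp)
qed

lemma walk_nonempty: "walk A xs \<Longrightarrow> xs \<noteq> []"
  by (cases xs) auto

lemma rtrancl_walk: "(u, v) \<in> A\<^sup>* \<Longrightarrow> \<exists>xs. walk A xs \<and> hd xs = u \<and> last xs = v"
proof (induction rule: rtrancl_induct)
  case base
  then show ?case by (intro exI[of _ "[u]"]) simp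
next
  case (step y z)
  then obtain xs where xs: "walk A xs" "hd xs = u" "last xs = y" by blast
  have ne: "xs \<noteq> []" using xs walk_nonempty by blast
  have "walk A (xs @ [z])" using walk_append[OF ne, of "[z]" A] xs step by simp
  then show ?case using xs ne by (intro exI[of _ "xs @ [z]"]) simp
qed

lemma idx_rtrancl:
  "xs \<noteq> [] \<Longrightarrow> (\<forall>i. Suc i < length xs \<longrightarrow> (xs ! i, xs ! Suc i) \<in> A) \<Longrightarrow> (hd xs, last xs) \<in> A\<^sup>*"
proof (induction xs)
  case Nil then show ?case by simp
next
  case (Cons x xs)
  show ?case
  proof (cases xs)
    case Nil then show ?thesis by simp
  next
    case (Cons y zs)
    have "\<forall>i. Suc i < length xs \<longrightarrow> (xs ! i, xs ! Suc i) \<in> A"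
    proof (intro allI impI)
      fix i assume "Suc i < length xs"
      then show "(xs ! i, xs ! Suc i) \<in> A" using Cons.prems(2)[rule_format, of "Suc i"] by simp
    qed
    then have "(hd xs, last xs) \<in> A\<^sup>*" using Cons.IH Cons by simp
    moreover have "(x, hd xs) \<in> A" using Cons.prems(2)[rule_format, of 0] Cons by simp
    ultimately show ?thesis using Cons by (simp add: converse_rtrancl_into_rtrancl)
  qed
qed

lemma dcycle3:
  assumes "distinct [a, b, c]" "(a, b) \<in> A" "(b, c) \<in> A" "(c, a) \<in> A"
  shows "dcycle A [a, b, c]"
  unfolding dcycle_def
proof (intro conjI allI impI)
  fix i assume "i < length [a, b, c]"
  then have "i = 0 \<or> i = 1 \<or> i = 2" by auto
  then show "([a, b, c] ! i, [a, b, c] ! ((i + 1) mod length [a, b, c])) \<in> A"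
    using assms by auto
qed (use assms in auto)

lemma obs3:
  assumes "1 \<notin> obs_closed AH \<rho> [a, b, c]"
  shows "(\<rho> (a, b), \<rho> (b, c)) \<in> AH"
proof -
  have l: "length [a, b, c] = 3" by simp
  have "(\<rho> ([a, b, c] ! ((1 + 3 - 1) mod 3), [a, b, c] ! 1),
          \<rho> ([a, b, c] ! 1, [a, b, c] ! ((1 + 1) mod 3))) \<in> AH"
    using assms unfolding obs_closed_def Let_def l by simp
  then show ?thesis by simp
qed

lemma hpath:
  assumes qt: "quasi_transitive A"
    and c3: "\<forall>xs. dcycle A xs \<and> length xs = 3 \<longrightarrow> H_cycle A AH \<rho> xs"
    and w: "walk A xs0" "hd xs0 = u" "last xs0 = v" and uv: "u \<noteq> v"
  shows "\<exists>ys. dpath A ys \<and> hd ys = u \<and> last ys = v \<and> obs_open AH \<rho> ys = {}"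
proof -
  let ?P = "\<lambda>ys. walk A ys \<and> hd ys = u \<and> last ys = v"
  obtain ys where ys: "?P ys" and mn: "\<And>zs. ?P zs \<Longrightarrow> length ys \<le> length zs"
    using ex_has_least_nat[of ?P xs0 length] w by blast
  have ne: "ys \<noteq> []" using ys walk_nonempty by blast
  have dist: "distinct ys"
  proof (rule ccontr)
    assume "\<not> distinct ys"
    then obtain i j where ij: "i < j" "j < length ys" "ys ! i = ys ! j"
      unfolding distinct_conv_nth by (metis linorder_neqE_nat)
    show False
    proof (cases "i = 0")
      case True
      have "?P (drop j ys)"
        using walk_drop[of A ys j] ys ij True ne by (simp add: hd_drop_conv_nth hd_conv_nth)
      then have "length ys \<le> length (drop j ys)" by (rule mn)
      then show False using ij by simp
    next
      case False
      let ?zs = "take i ys @ drop j ys"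
      have t: "take i ys \<noteq> []" "drop j ys \<noteq> []" using False ij by auto
      have "last (take i ys) = take i ys ! (length (take i ys) - 1)"
        using t by (simp add: last_conv_nth)
      then have "last (take i ys) = ys ! (i - 1)" using False ij by simp
      moreover have "hd (drop j ys) = ys ! i" using ij by (simp add: hd_drop_conv_nth)
      moreover have "(ys ! (i - 1), ys ! i) \<in> A"
        using walk_nth[of A ys "i - 1"] ys ij False by simp
      ultimately have "walk A ?zs"
        using walk_append[OF t] walk_take[of A ys i] walk_drop[of A ys j] ys ij False by simp
      moreover have "hd ?zs = u" using t ys ne False by simp
      moreover have "last ?zs = v" using t ys ij by simp
      ultimately have "length ys \<le> length ?zs" using mn by blast
      then show False using ij False by simp
    qed
  qed
  have bk: "(ys ! (i + 2), ys ! i) \<in> A" if hi: "i + 2 < length ys" for i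
  proof -
    have a1: "(ys ! i, ys ! Suc i) \<in> A" using walk_nth[of A ys i] ys hi by simp
    have a2: "(ys ! Suc i, ys ! (i + 2)) \<in> A" using walk_nth[of A ys "Suc i"] ys hi by simp
    have neq: "ys ! i \<noteq> ys ! (i + 2)" using dist hi by (simp add: nth_eq_iff_index_eq)
    have nf: "(ys ! i, ys ! (i + 2)) \<notin> A"
    proof
      assume a: "(ys ! i, ys ! (i + 2)) \<in> A"
      let ?zs = "take (Suc i) ys @ drop (i + 2) ys"
      have t: "take (Suc i) ys \<noteq> []" "drop (i + 2) ys \<noteq> []" using hi by auto
      have "last (take (Suc i) ys) = take (Suc i) ys ! (length (take (Suc i) ys) - 1)"
        using t by (simp add: last_conv_nth)
      then have "last (take (Suc i) ys) = ys ! i" using hi by simp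
      moreover have "hd (drop (i + 2) ys) = ys ! (i + 2)" using hi by (simp add: hd_drop_conv_nth)
      ultimately have "walk A ?zs"
        using walk_append[OF t] walk_take[of A ys "Suc i"] walk_drop[of A ys "i + 2"] ys hi a by simp
      moreover have "hd ?zs = u" using t ys ne by simp
      moreover have "last ?zs = v" using t ys hi by simp
      ultimately have "length ys \<le> length ?zs" using mn by blast
      then show False using hi by simp
    qed
    then show ?thesis using qt neq a1 a2 unfolding quasi_transitive_def by blast
  qed
  have obs: "obs_open AH \<rho> ys = {}"
  proof -
    have "m \<notin> obs_open AH \<rho> ys" for m
    proof
      assume "m \<in> obs_open AH \<rho> ys"
      then have m: "1 \<le> m" "m + 1 < length ys"
        and bad: "(\<rho> (ys ! (m - 1), ys ! m), \<rho> (ys ! m, ys ! (m + 1))) \<notin> AH"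
        unfolding obs_open_def by auto
      define i where "i = m - 1"
      have im: "m = Suc i" "i + 2 < length ys" using m i_def by auto
      have d3: "distinct [ys ! i, ys ! Suc i, ys ! (i + 2)]"
        using dist im by (simp add: nth_eq_iff_index_eq)
      have "dcycle A [ys ! i, ys ! Suc i, ys ! (i + 2)]"
        using dcycle3[OF d3] walk_nth[of A ys i] walk_nth[of A ys "Suc i"] bk[OF im(2)] ys im
        by simp
      then have "H_cycle A AH \<rho> [ys ! i, ys ! Suc i, ys ! (i + 2)]" using c3 by simp
      then have "obs_closed AH \<rho> [ys ! i, ys ! Suc i, ys ! (i + 2)] = {}"
        unfolding H_cycle_def by simp
      then have "1 \<notin> obs_closed AH \<rho> [ys ! i, ys ! Suc i, ys ! (i + 2)]" by simp
      then have "(\<rho> (ys ! i, ys ! Suc i), \<rho> (ys ! Suc i, ys ! (i + 2))) \<in> AH"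
        by (rule obs3)
      then show False using bad im by simp
    qed
    then show ?thesis by blast
  qed
  have "dpath A ys" unfolding dpath_def using ne dist walk_nth[of A ys] ys by blast
  then show ?thesis using ys obs by blast
qed

lemma reach_V:
  assumes "A \<subseteq> V \<times> V" "(y, z) \<in> A\<^sup>*" "y \<in> V"
  shows "z \<in> V"
  using assms(2,3,1) by (induction rule: rtrancl_induct) auto

lemma terminal_exists:
  assumes fin: "finite V" and AV: "A \<subseteq> V \<times> V" and x: "x \<in> V"
  shows "\<exists>y. (x, y) \<in> A\<^sup>* \<and> (\<forall>z. (y, z) \<in> A\<^sup>* \<longrightarrow> (z, y) \<in> A\<^sup>*)"
proof -
  let ?Rs = "\<lambda>y. {z. (y, z) \<in> A\<^sup>*}"
  obtain y where y: "(x, y) \<in> A\<^sup>*"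
    and mn: "\<And>y'. (x, y') \<in> A\<^sup>* \<Longrightarrow> card (?Rs y) \<le> card (?Rs y')"
    using ex_has_least_nat[of "\<lambda>y. (x, y) \<in> A\<^sup>*" x "\<lambda>y. card (?Rs y)"] by blast
  have yV: "y \<in> V" using reach_V[OF AV y x] .
  have finy: "finite (?Rs y)"
    using reach_V[OF AV _ yV] by (intro finite_subset[OF _ fin]) blast
  have "(z, y) \<in> A\<^sup>*" if z: "(y, z) \<in> A\<^sup>*" for z
  proof -
    have sub: "?Rs z \<subseteq> ?Rs y" using z by auto
    have "(x, z) \<in> A\<^sup>*" using y z by (rule rtrancl_trans)
    then have le: "card (?Rs y) \<le> card (?Rs z)" by (rule mn)
    have "card (?Rs z) = card (?Rs y)" using le card_mono[OF finy sub] by linarith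
    then have "?Rs z = ?Rs y" by (rule card_subset_eq[OF finy sub])
    then show ?thesis by auto
  qed
  then show ?thesis using y by blast
qed

theorem corollary23:
  fixes V :: "'a set" and A :: "('a \<times> 'a) set"
    and VH :: "'b set" and AH :: "('b \<times> 'b) set"
    and \<rho> :: "'a \<times> 'a \<Rightarrow> 'b" and k :: nat
  assumes "digraph V A" and "loopless A"
    and "digraph VH AH"
    and "\<forall>a\<in>A. \<rho> a \<in> VH"
    and "quasi_transitive A"
    and "\<forall>xs. dcycle A xs \<and> length xs = 3 \<longrightarrow> H_cycle A AH \<rho> xs"
    and "2 \<le> k"
  shows "\<exists>S. kH_kernel V A AH \<rho> k S"
proof -
  have fin: "finite V" and AV: "A \<subseteq> V \<times> V" using assms(1) unfolding digraph_def by auto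
  let ?R = "A\<^sup>*"
  define T where "T = {y. \<forall>z. (y, z) \<in> ?R \<longrightarrow> (z, y) \<in> ?R}"
  define cls where "cls y = {z. (y, z) \<in> ?R \<and> (z, y) \<in> ?R}" for y
  define r where "r y = (SOME z. z \<in> cls y)" for y
  define S where "S = r ` (T \<inter> V)"
  have rc: "r y \<in> cls y" for y
    unfolding r_def by (rule someI[of _ y]) (simp add: cls_def)
  have req: "r a = r b" if "(a, b) \<in> ?R" "(b, a) \<in> ?R" for a b
  proof -
    have "cls a = cls b" unfolding cls_def using that
      by (auto intro: rtrancl_trans)
    then show ?thesis unfolding r_def by simp
  qed
  have rT: "r y \<in> T" if "y \<in> T" for y
    using that rc[of y] unfolding T_def cls_def by (blast intro: rtrancl_trans)
  have rV: "r y \<in> V" if "y \<in> V" for y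
    using rc[of y] reach_V[OF AV _ that] unfolding cls_def by blast
  have SV: "S \<subseteq> V" unfolding S_def using rV by blast
  have indep: "\<forall>u\<in>S. \<forall>v\<in>S. u \<noteq> v \<longrightarrow>
        (\<forall>xs. dpath A xs \<and> hd xs = u \<and> last xs = v \<longrightarrow> k \<le> H_length_open AH \<rho> xs)"
  proof (intro ballI impI allI)
    fix u v xs
    assume u: "u \<in> S" and v: "v \<in> S" and uv: "u \<noteq> v"
      and p: "dpath A xs \<and> hd xs = u \<and> last xs = v"
    obtain a where a: "a \<in> T" "u = r a" using u unfolding S_def by blast
    obtain b where b: "b \<in> T" "v = r b" using v unfolding S_def by blast
    have uv1: "(u, v) \<in> ?R" using idx_rtrancl[of xs A] p unfolding dpath_def by blast
    have vu: "(v, u) \<in> ?R" using uv1 rT[OF a(1)] a(2) unfolding T_def by blast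
    have au: "(a, u) \<in> ?R" "(u, a) \<in> ?R" using rc[of a] a(2) unfolding cls_def by auto
    have bv: "(b, v) \<in> ?R" "(v, b) \<in> ?R" using rc[of b] b(2) unfolding cls_def by auto
    have "(a, b) \<in> ?R" using rtrancl_trans[OF rtrancl_trans[OF au(1) uv1] bv(2)] .
    moreover have "(b, a) \<in> ?R" using rtrancl_trans[OF rtrancl_trans[OF bv(1) vu] au(2)] .
    ultimately have "r a = r b" by (rule req)
    then have "u = v" using a b by simp
    then show "k \<le> H_length_open AH \<rho> xs" using uv by simp
  qed
  have absorb: "\<forall>x \<in> V - S. \<exists>xs. dpath A xs \<and> hd xs = x \<and> last xs \<in> S \<and>
        H_length_open AH \<rho> xs \<le> k - 1"
  proof
    fix x assume x: "x \<in> V - S"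
    obtain t where t: "(x, t) \<in> ?R" "\<forall>z. (t, z) \<in> ?R \<longrightarrow> (z, t) \<in> ?R"
      using terminal_exists[OF fin AV] x by blast
    have tT: "t \<in> T" using t unfolding T_def by blast
    have tV: "t \<in> V" using reach_V[OF AV t(1)] x by blast
    have rS: "r t \<in> S" unfolding S_def using tT tV by blast
    have "(t, r t) \<in> ?R" using rc[of t] unfolding cls_def by blast
    then have xr: "(x, r t) \<in> ?R" using t(1) by (meson rtrancl_trans)
    have ne: "x \<noteq> r t" using x rS by blast
    obtain ws where ws: "walk A ws" "hd ws = x" "last ws = r t" using rtrancl_walk[OF xr] by blast
    obtain ys where ys: "dpath A ys" "hd ys = x" "last ys = r t" "obs_open AH \<rho> ys = {}"
      using hpath[OF assms(5) assms(6) ws ne] by blast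
    have "H_length_open AH \<rho> ys \<le> k - 1" using ys(4) assms(7) unfolding H_length_open_def by simp
    then show "\<exists>xs. dpath A xs \<and> hd xs = x \<and> last xs \<in> S \<and> H_length_open AH \<rho> xs \<le> k - 1"
      using ys rS by (intro exI[of _ ys]) simp
  qed
  have "kH_kernel V A AH \<rho> k S" unfolding kH_kernel_def by (intro conjI SV indep absorb)
  then show ?thesis by (rule exI)
qed

end
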